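(* The set FIN of programs computing a function with finite domain has asymptotic probability one, and the set COF of programs computing a function with cofinite domain has asymptotic probability zero.
   Context: Model of computation: a single head reads and writes symbols $0,1$ on a one-way infinite tape with cells indexed $0,1,2,\dots$; the head starts on cell $0$. An $n$-state program has states $Q=\{q_1,\dots,q_n\}$, with $q_1$ the start state, plus a separate halt state not in $Q$. A program is a function $p: Q\times\{0,1\}\to (Q\cup\{\mathrm{halt}\})\times\{0,1\}\times\{L,R\}$; $p(q,i)=\langle r,j,d\rangle$ means: in state $q$ reading $i$, write $j$, move one cell in direction $d$, enter state $r$. The computation stops when the halt state is reached ("halting") or when the head attempts to move left from cell $0$ ("falls off the tape"); falling off is not counted as halting. Let $P_n$ be the set of all $n$-state programs; the asymptotic probability of a set $B$ of programs is $\mu(B)=\lim_{n\to\infty}|B\cap P_n|/|P_n|$. Programs compute partial functions on $\mathbb{N}$ with input given in unary: input $m$ is a block of $1$s of length determined by $m$ starting at cell $0$, followed by $0$s; the domain of the function computed by $p$ is the set of inputs on which $p$ halts. FIN is the set of programs whose computed function has finite domain; COF is the set of programs whose computed function has cofinite domain. *)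

theory Defs
  imports Complex_Main "HOL-Library.FuncSet"
begin

text \<open>Turing machines on a one-way infinite binary tape (cells 0,1,2,...).
  States of an n-state program are 0,...,n-1 (state 0 is the start state q1);
  the halt state is represented by None.  Symbols 0/1 are False/True.\<close>

datatype dir = L | R

type_synonym instr = "nat option \<times> bool \<times> dir"
type_synonym program = "nat \<times> bool \<Rightarrow> instr"

definition instrs :: "nat \<Rightarrow> instr set" where
  "instrs n = {(r, j, d). case r of None \<Rightarrow> True | Some q \<Rightarrow> q < n}"

text \<open>The set P_n of all n-state programs (functions Q x {0,1} -> (Q u {halt}) x {0,1} x {L,R}),
  represented extensionally so that they form a finite set.\<close>
definition programs :: "nat \<Rightarrow> program set" where
  "programs n = ({0..<n} \<times> UNIV) \<rightarrow>\<^sub>E instrs n"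

datatype status = Running nat | Halted | Fell

type_synonym config = "status \<times> (nat \<Rightarrow> bool) \<times> nat"

fun step :: "program \<Rightarrow> config \<Rightarrow> config" where
  "step p (Running q, t, h) =
     (case p (q, t h) of (r, j, d) \<Rightarrow>
        (if d = L \<and> h = 0 then (Fell, t(h := j), h)
         else (case r of None \<Rightarrow> Halted | Some r' \<Rightarrow> Running r',
               t(h := j), if d = L then h - 1 else h + 1)))"
| "step p (Halted, t, h) = (Halted, t, h)"
| "step p (Fell, t, h) = (Fell, t, h)"

text \<open>Input m in unary: m ones starting at cell 0, followed by zeros.\<close>
definition input :: "nat \<Rightarrow> nat \<Rightarrow> bool" where
  "input m = (\<lambda>i. i < m)"

definition halts :: "program \<Rightarrow> nat \<Rightarrow> bool" where
  "halts p m \<longleftrightarrow> (\<exists>k. fst ((step p ^^ k) (Running 0, input m, 0)) = Halted)"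

definition dom_prog :: "program \<Rightarrow> nat set" where
  "dom_prog p = {m. halts p m}"

definition FIN :: "program set" where
  "FIN = {p. finite (dom_prog p)}"

definition COF :: "program set" where
  "COF = {p. finite (UNIV - dom_prog p)}"

definition has_asym_prob :: "program set \<Rightarrow> real \<Rightarrow> bool" where
  "has_asym_prob B c \<longleftrightarrow>
     (\<lambda>n. real (card (B \<inter> programs n)) / real (card (programs n))) \<longlonglongrightarrow> c"

end

theory Submission
  imports Defs
begin


fun ok :: "nat \<Rightarrow> dir list \<Rightarrow> bool" where
  "ok x [] = True"
| "ok x (d # ds) = (case d of R \<Rightarrow> ok (Suc x) ds | L \<Rightarrow> (0 < x \<and> ok (x - 1) ds))"

fun pw :: "nat \<Rightarrow> nat \<Rightarrow> real" where
  "pw 0 x = 1"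
| "pw (Suc T) x = (pw T (Suc x) + (if 0 < x then pw T (x - 1) else 0)) / 2"

lemma pw_bounds: "0 \<le> pw T x \<and> pw T x \<le> 1"
proof (induction T arbitrary: x)
  case (Suc T)
  have a: "0 \<le> pw T (Suc x) \<and> pw T (Suc x) \<le> 1" by (rule Suc.IH)
  have b: "0 \<le> pw T (x - 1) \<and> pw T (x - 1) \<le> 1" by (rule Suc.IH)
  show ?case unfolding pw.simps(2) using a b by (auto split: if_splits)
qed simp

lemma pw_mono: "pw (Suc T) x \<le> pw T x"
proof (induction T arbitrary: x)
  case 0
  then show ?case using pw_bounds[of 0] pw_bounds[of 0 "x - 1"] by auto
next
  case (Suc T)
  have e1: "pw (Suc (Suc T)) x = (pw (Suc T) (Suc x) + (if 0 < x then pw (Suc T) (x - 1) else 0)) / 2"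
    by (rule pw.simps(2))
  have e2: "pw (Suc T) x = (pw T (Suc x) + (if 0 < x then pw T (x - 1) else 0)) / 2"
    by (rule pw.simps(2))
  show ?case using e1 e2 Suc.IH[of "Suc x"] Suc.IH[of "x - 1"]
    by (simp del: pw.simps split: if_splits)
qed

lemma pw_mono': "T1 \<le> T2 \<Longrightarrow> pw T2 x \<le> pw T1 x"
proof (induction T2 rule: dec_induct)
  case base then show ?case by simp
next
  case (step m) then show ?case using pw_mono[of m x] by linarith
qed

lemma pw_supermult: "1 - pw (T1 + T2) (Suc x) \<ge> (1 - pw T1 x) * (1 - pw T2 0)"
proof (induction T1 arbitrary: x)
  case 0
  then show ?case using pw_bounds[of T2 "Suc x"] by simp
next
  case (Suc T1)
  have g0: "0 \<le> 1 - pw T2 0" "1 - pw T2 0 \<le> 1" using pw_bounds[of T2 0] by auto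
  have A: "1 - pw (T1 + T2) (Suc (Suc x)) \<ge> (1 - pw T1 (Suc x)) * (1 - pw T2 0)" using Suc by blast
  have B: "1 - pw (T1 + T2) x \<ge> (if 0 < x then 1 - pw T1 (x - 1) else 1) * (1 - pw T2 0)"
  proof (cases "0 < x")
    case True
    then show ?thesis using Suc[of "x - 1"] by simp
  next
    case False
    then show ?thesis using pw_mono'[of T2 "T1 + T2" 0] by simp
  qed
  have "1 - pw (Suc T1 + T2) (Suc x) = ((1 - pw (T1 + T2) (Suc (Suc x))) + (1 - pw (T1 + T2) x)) / 2"
    by (simp add: field_simps)
  also have "\<dots> \<ge> ((1 - pw T1 (Suc x)) * (1 - pw T2 0) + (if 0 < x then 1 - pw T1 (x - 1) else 1) * (1 - pw T2 0)) / 2"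
    using A B by (intro divide_right_mono add_mono) auto
  also have "((1 - pw T1 (Suc x)) * (1 - pw T2 0) + (if 0 < x then 1 - pw T1 (x - 1) else 1) * (1 - pw T2 0)) / 2
     = (1 - pw (Suc T1) x) * (1 - pw T2 0)"
    by (simp add: field_simps)
  finally show ?case by linarith
qed


lemma pw_tends0: assumes "e > 0" shows "\<exists>T. pw T 0 < e"
proof -
  define g where "g T = 1 - pw T 0" for T
  define Lm where "Lm = Sup (range g)"
  have gb: "0 \<le> g T" "g T \<le> 1" for T using pw_bounds[of T 0] by (auto simp: g_def)
  have bdd: "bdd_above (range g)" using gb(2) by (auto intro!: bdd_aboveI[where M=1])
  have le: "g T \<le> Lm" for T unfolding Lm_def by (rule cSup_upper[OF _ bdd]) auto
  have Lm1: "Lm \<le> 1" unfolding Lm_def by (rule cSup_least) (use gb in auto)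
  have rec: "(g S)^2 \<le> 2 * Lm - 1" for S
  proof -
    have "1 - pw (S + S) (Suc 0) \<ge> (1 - pw S 0) * (1 - pw S 0)" using pw_supermult[of S 0 S] by (simp del: pw.simps)
    then have "g (Suc (S + S)) \<ge> ((g S)^2 + 1) / 2" by (simp add: g_def power2_eq_square)
    with le[of "Suc (S+S)"] show ?thesis by (simp add: field_simps)
  qed
  have "g S \<le> sqrt (2 * Lm - 1)" for S
    using rec[of S] gb[of S] real_le_rsqrt by blast
  then have "Lm \<le> sqrt (2 * Lm - 1)" unfolding Lm_def by (intro cSup_least) auto
  moreover have "0 \<le> Lm" using le[of 0] gb[of 0] by linarith
  ultimately have "Lm^2 \<le> 2 * Lm - 1"
    by (metis real_sqrt_ge_0_iff real_sqrt_le_iff real_sqrt_pow2_iff real_sqrt_power order.trans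
          le_less not_le power2_eq_square)
  then have "(Lm - 1)^2 \<le> 0" by (simp add: power2_eq_square algebra_simps)
  then have "Lm = 1" by simp
  then have "1 - e < Sup (range g)" using assms Lm_def by simp
  then obtain T where "1 - e < g T" using less_cSupD[of "range g"] by blast
  then show ?thesis by (auto simp: g_def)
qed



lemma dir_UNIV: "(UNIV :: dir set) = {L, R}"
  using dir.exhaust by auto

lemma finite_dir[simp]: "finite (UNIV :: dir set)"
  by (simp add: dir_UNIV)

lemma card_dir: "card (UNIV :: dir set) = 2"
  by (simp add: dir_UNIV)

lemma finite_bd[simp]: "finite (UNIV :: (bool \<times> dir) set)"
  by (simp flip: UNIV_Times_UNIV)

lemma card_bd: "card (UNIV :: (bool \<times> dir) set) = 4"
  by (simp flip: UNIV_Times_UNIV add: card_cartesian_product card_dir)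

lemma instrs_eq: "instrs n = insert None (Some ` {..<n}) \<times> UNIV \<times> UNIV"
  unfolding instrs_def by (auto split: option.splits)

lemma finite_instrs[simp]: "finite (instrs n)"
  unfolding instrs_eq by (intro finite_cartesian_product) auto

lemma card_instrs: "card (instrs n) = 4 * (n + 1)"
  unfolding instrs_eq by (simp add: card_cartesian_product card_bd card_image)

lemma card_instrs_dir: "card {v \<in> instrs n. snd (snd v) = d} = 2 * (n + 1)"
proof -
  have "{v \<in> instrs n. snd (snd v) = d} = insert None (Some ` {..<n}) \<times> UNIV \<times> {d}"
    unfolding instrs_eq by auto
  then show ?thesis by (simp add: card_cartesian_product card_image)
qed

lemma card_programs: "card (programs n) = (4 * (n + 1)) ^ (2 * n)"
  unfolding programs_def
  by (simp add: card_PiE card_instrs card_cartesian_product)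

definition init :: config where "init = (Running 0, (\<lambda>_. True), 0)"
definition run :: "program \<Rightarrow> nat \<Rightarrow> config" where "run p k = (step p ^^ k) init"
definition stepv :: "instr \<Rightarrow> config \<Rightarrow> config" where "stepv v c = step (\<lambda>_. v) c"
definition sim :: "instr list \<Rightarrow> config" where "sim ws = fold stepv ws init"
definition stq :: "config \<Rightarrow> nat" where "stq c = (case fst c of Running q \<Rightarrow> q | _ \<Rightarrow> 0)"
definition keyc :: "config \<Rightarrow> nat \<times> bool" where "keyc c = (stq c, fst (snd c) (snd (snd c)))"
definition trace :: "program \<Rightarrow> nat \<Rightarrow> instr list" where
  "trace p k = map (\<lambda>i. p (keyc (run p i))) [0..<k]"

lemma step_keyc: "step p c = stepv (p (keyc c)) c"
proof -
  obtain s t h where c: "c = (s, t, h)" by (cases c) auto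
  show ?thesis unfolding c stepv_def keyc_def stq_def
    by (cases s) (auto split: prod.splits)
qed

lemma run_Suc: "run p (Suc k) = stepv (p (keyc (run p k))) (run p k)"
  unfolding run_def by (simp add: step_keyc[symmetric])

lemma sim_snoc: "sim (ws @ [v]) = stepv v (sim ws)"
  unfolding sim_def by simp

lemma trace_Suc: "trace p (Suc k) = trace p k @ [p (keyc (run p k))]"
  unfolding trace_def by simp

lemma sim_trace: "sim (trace p k) = run p k"
proof (induction k)
  case 0 then show ?case by (simp add: trace_def sim_def run_def)
next
  case (Suc k) then show ?case by (simp only: trace_Suc sim_snoc run_Suc)
qed

lemma length_trace[simp]: "length (trace p k) = k"
  by (simp add: trace_def)

lemma take_trace: "i \<le> k \<Longrightarrow> take i (trace p k) = trace p i"
  unfolding trace_def by (simp add: take_map)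

lemma nth_trace: "i < k \<Longrightarrow> trace p k ! i = p (keyc (run p i))"
  unfolding trace_def by simp

lemma stq_stepv: "stq c < n \<Longrightarrow> v \<in> instrs n \<Longrightarrow> stq (stepv v c) < n"
proof -
  assume a: "stq c < n" "v \<in> instrs n"
  obtain s t h where c: "c = (s, t, h)" by (cases c) auto
  obtain r j d where v: "v = (r, j, d)" by (cases v) auto
  have r: "r = None \<or> (\<exists>r'. r = Some r' \<and> r' < n)" using a(2) unfolding v instrs_eq by auto
  show ?thesis
  proof (cases s)
    case (Running q)
    then show ?thesis using a r unfolding c v stepv_def stq_def by auto
  qed (use a in \<open>auto simp: c stepv_def stq_def\<close>)
qed

lemma keyc_in: "stq c < n \<Longrightarrow> keyc c \<in> {0..<n} \<times> UNIV"
  by (simp add: keyc_def)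

lemma prog_val: "p \<in> programs n \<Longrightarrow> stq c < n \<Longrightarrow> p (keyc c) \<in> instrs n"
  unfolding programs_def using keyc_in by (blast intro: PiE_mem)

lemma stq_run: "p \<in> programs n \<Longrightarrow> 0 < n \<Longrightarrow> stq (run p k) < n"
proof (induction k)
  case 0 then show ?case by (simp add: run_def init_def stq_def)
next
  case (Suc k)
  have "p (keyc (run p k)) \<in> instrs n"
    using Suc prog_val by blast
  then show ?case using Suc by (simp add: run_Suc stq_stepv)
qed

lemma trace_in: "p \<in> programs n \<Longrightarrow> 0 < n \<Longrightarrow> set (trace p k) \<subseteq> instrs n"
proof
  fix v assume p: "p \<in> programs n" "0 < n" and "v \<in> set (trace p k)"
  then obtain i where v: "v = p (keyc (run p i))" by (auto simp: trace_def)
  show "v \<in> instrs n" using p stq_run prog_val unfolding v by blast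
qed

lemma stq_sim: "set ws \<subseteq> instrs n \<Longrightarrow> 0 < n \<Longrightarrow> stq (sim ws) < n"
proof (induction ws rule: rev_induct)
  case Nil then show ?case by (simp add: sim_def init_def stq_def)
next
  case (snoc v ws) then show ?case by (simp add: sim_snoc stq_stepv)
qed




lemma step_fix: "fst c = Fell \<or> fst c = Halted \<Longrightarrow> step p c = c"
  by (cases c) auto

lemma funpow_fix: "f x = x \<Longrightarrow> (f ^^ k) x = x"
  by (induction k) auto

lemma step_agree:
  assumes "fst c1 = fst c2" "snd (snd c1) = snd (snd c2)"
    "\<forall>i<m. fst (snd c1) i = fst (snd c2) i" "snd (snd c1) < m"
  shows "fst (step p c1) = fst (step p c2) \<and> snd (snd (step p c1)) = snd (snd (step p c2)) \<and>
    (\<forall>i<m. fst (snd (step p c1)) i = fst (snd (step p c2)) i) \<and>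
    snd (snd (step p c2)) \<le> Suc (snd (snd c2))"
proof -
  obtain s t1 h where c1: "c1 = (s, t1, h)" by (cases c1) auto
  obtain t2 where c2: "c2 = (s, t2, h)" using assms(1,2) c1 by (cases c2) auto
  have th: "t1 h = t2 h" using assms(3,4) c1 c2 by auto
  have ag: "\<forall>i<m. t1 i = t2 i" using assms(3) c1 c2 by auto
  show ?thesis
  proof (cases s)
    case (Running q)
    obtain r j d where pv: "p (q, t2 h) = (r, j, d)" by (cases "p (q, t2 h)") auto
    show ?thesis using ag unfolding c1 c2 Running by (auto simp add: th pv split: option.splits)
  qed (use ag in \<open>auto simp: c1 c2\<close>)
qed

lemma agree_run:
  "k \<le> m \<Longrightarrow> fst ((step p ^^ k) (Running 0, input m, 0)) = fst (run p k) \<and>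
     snd (snd ((step p ^^ k) (Running 0, input m, 0))) = snd (snd (run p k)) \<and>
     snd (snd (run p k)) \<le> k \<and>
     (\<forall>i<m. fst (snd ((step p ^^ k) (Running 0, input m, 0))) i = fst (snd (run p k)) i)"
proof (induction k)
  case 0 then show ?case by (simp add: run_def init_def input_def)
next
  case (Suc k)
  then have IH: "fst ((step p ^^ k) (Running 0, input m, 0)) = fst (run p k) \<and>
     snd (snd ((step p ^^ k) (Running 0, input m, 0))) = snd (snd (run p k)) \<and>
     snd (snd (run p k)) \<le> k \<and>
     (\<forall>i<m. fst (snd ((step p ^^ k) (Running 0, input m, 0))) i = fst (snd (run p k)) i)" by simp
  have lt: "snd (snd ((step p ^^ k) (Running 0, input m, 0))) < m" using IH Suc(2) by linarith
  have "run p (Suc k) = step p (run p k)" by (simp add: run_def)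
  then show ?case using step_agree[OF _ _ _ lt, of "run p k" p] IH by auto
qed

lemma fell_FIN: assumes "fst (run p T) = Fell" shows "p \<in> FIN"
proof -
  have "dom_prog p \<subseteq> {..<T}"
  proof
    fix m assume "m \<in> dom_prog p"
    then obtain k where hk: "fst ((step p ^^ k) (Running 0, input m, 0)) = Halted"
      by (auto simp: dom_prog_def halts_def)
    show "m \<in> {..<T}"
    proof (rule ccontr)
      assume "m \<notin> {..<T}"
      then have "T \<le> m" by simp
      then have fT: "fst ((step p ^^ T) (Running 0, input m, 0)) = Fell"
        using agree_run[of T m p] assms by simp
      show False
      proof (cases "k \<le> T")
        case True
        have "(step p ^^ T) (Running 0, input m, 0) = (step p ^^ (T - k)) ((step p ^^ k) (Running 0, input m, 0))"
          using True by (metis funpow_add le_add_diff_inverse2 o_apply)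
        also have "\<dots> = (step p ^^ k) (Running 0, input m, 0)"
          by (rule funpow_fix, rule step_fix) (use hk in simp)
        finally show False using fT hk by simp
      next
        case False
        have "(step p ^^ k) (Running 0, input m, 0) = (step p ^^ (k - T)) ((step p ^^ T) (Running 0, input m, 0))"
          using False by (metis funpow_add le_add_diff_inverse2 o_apply nat_le_linear)
        also have "\<dots> = (step p ^^ T) (Running 0, input m, 0)"
          by (rule funpow_fix, rule step_fix) (use fT in simp)
        finally show False using fT hk by simp
      qed
    qed
  qed
  then show ?thesis unfolding FIN_def by (auto intro: finite_subset)
qed



definition CF :: "nat \<Rightarrow> instr list \<Rightarrow> bool" where
  "CF n ws \<longleftrightarrow> (\<forall>i \<le> length ws. \<exists>q<n. fst (sim (take i ws)) = Running q) \<and>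
      inj_on (\<lambda>i. stq (sim (take i ws))) {..length ws}"

definition kap :: "instr list \<Rightarrow> nat \<Rightarrow> nat \<times> bool" where
  "kap ws i = keyc (sim (take i ws))"

definition dirof :: "instr \<Rightarrow> dir" where "dirof v = snd (snd v)"

lemma CF_Nil: "0 < n \<Longrightarrow> CF n []"
  by (simp add: CF_def sim_def init_def)

lemma allrun_ok:
  "(\<forall>i \<le> length ws. \<exists>q. fst (fold stepv (take i ws) (Running q0, t, h)) = Running q)
    \<Longrightarrow> ok h (map dirof ws)"
proof (induction ws arbitrary: q0 t h)
  case Nil then show ?case by simp
next
  case (Cons v ws)
  obtain r j d where v: "v = (r, j, d)" by (cases v) auto
  from Cons.prems[rule_format, of 1] obtain q where
    q: "fst (stepv v (Running q0, t, h)) = Running q" by auto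
  then have nf: "\<not> (d = L \<and> h = 0)" and rq: "r = Some q"
    by (auto simp: v stepv_def split: if_splits option.splits)
  define h' where "h' = (if d = L then h - 1 else h + 1)"
  have sv: "stepv v (Running q0, t, h) = (Running q, t(h := j), h')"
    using nf rq by (simp add: v stepv_def h'_def)
  have "ok h' (map dirof ws)"
  proof (rule Cons.IH[of q "t(h := j)"], intro allI impI)
    fix i assume "i \<le> length ws"
    then have "Suc i \<le> length (v # ws)" by simp
    from Cons.prems[rule_format, OF this] show "\<exists>q'. fst (fold stepv (take i ws) (Running q, t(h := j), h')) = Running q'"
      by (simp add: sv)
  qed
  moreover have dv: "dirof v = d" by (simp add: v dirof_def)
  ultimately show ?case using nf by (cases d) (auto simp: h'_def)
qed

lemma CF_ok: "CF n ws \<Longrightarrow> ok 0 (map dirof ws)"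
  unfolding CF_def sim_def init_def by (rule allrun_ok) blast

lemma CF_snoc:
  assumes "CF n ws" "fst (sim (ws @ [v])) = Running r" "r < n"
    "r \<notin> (\<lambda>i. stq (sim (take i ws))) ` {..length ws}"
  shows "CF n (ws @ [v])"
proof -
  have tk: "take i (ws @ [v]) = take i ws" if "i \<le> length ws" for i using that by simp
  have A: "\<forall>i \<le> length (ws @ [v]). \<exists>q<n. fst (sim (take i (ws @ [v]))) = Running q"
  proof (intro allI impI)
    fix i assume "i \<le> length (ws @ [v])"
    then consider "i \<le> length ws" | "i = Suc (length ws)" by fastforce
    then show "\<exists>q<n. fst (sim (take i (ws @ [v]))) = Running q"
    proof cases
      case 1 then show ?thesis using assms(1) tk unfolding CF_def by simp
    next
      case 2 then show ?thesis using assms(2,3) by simp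
    qed
  qed
  have e: "{..length (ws @ [v])} = insert (Suc (length ws)) {..length ws}" by auto
  have inj0: "inj_on (\<lambda>i. stq (sim (take i ws))) {..length ws}" using assms(1) CF_def by blast
  have inj1: "inj_on (\<lambda>i. stq (sim (take i (ws @ [v])))) {..length ws}"
    using inj0 by (rule inj_on_cong[THEN iffD1, rotated]) (simp add: tk)
  have st: "stq (sim (take (Suc (length ws)) (ws @ [v]))) = r" using assms(2) by (simp add: stq_def)
  have nin: "r \<notin> (\<lambda>i. stq (sim (take i (ws @ [v])))) ` {..length ws}"
    using assms(4) tk by (auto simp: image_def)
  have "inj_on (\<lambda>i. stq (sim (take i (ws @ [v])))) {..length (ws @ [v])}"
    unfolding e using inj1 nin st by (auto simp: inj_on_insert)
  with A show ?thesis unfolding CF_def by blast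
qed

lemma kap_inj: "CF n ws \<Longrightarrow> m \<le> Suc (length ws) \<Longrightarrow> inj_on (kap ws) {..<m}"
  unfolding CF_def inj_on_def kap_def keyc_def by auto

lemma kap_in: "set ws \<subseteq> instrs n \<Longrightarrow> 0 < n \<Longrightarrow> kap ws i \<in> {0..<n} \<times> UNIV"
proof -
  assume a: "set ws \<subseteq> instrs n" "0 < n"
  have "set (take i ws) \<subseteq> instrs n" using a(1) set_take_subset[of i ws] by blast
  then show ?thesis unfolding kap_def using a(2) by (intro keyc_in stq_sim)
qed

lemma kap_trace: "i \<le> s \<Longrightarrow> kap (trace p s) i = keyc (run p i)"
  by (simp add: kap_def take_trace sim_trace)

lemma finite_lists_sub: "finite V \<Longrightarrow> finite {ws. set ws \<subseteq> V \<and> length ws = T \<and> P ws}"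
  by (rule finite_subset[OF _ finite_lists_length_eq[of V T]]) auto

lemma count_ok:
  assumes fin: "finite V" and cR: "card {v\<in>V. dirof v = R} = c" and cL: "card {v\<in>V. dirof v = L} = c"
  shows "real (card {ws. set ws \<subseteq> V \<and> length ws = T \<and> ok x (map dirof ws)}) \<le> (2 * real c) ^ T * pw T x"
proof (induction T arbitrary: x)
  case 0
  have "{ws. set ws \<subseteq> V \<and> length ws = 0 \<and> ok x (map dirof ws)} \<subseteq> {[]}" by auto
  then have "card {ws. set ws \<subseteq> V \<and> length ws = 0 \<and> ok x (map dirof ws)} \<le> card {[]::instr list}"
    by (intro card_mono) auto
  then show ?case by simp
next
  case (Suc T)
  define A where "A T x = {ws. set ws \<subseteq> V \<and> length ws = T \<and> ok x (map dirof ws)}" for T x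
  have finA: "finite (A T y)" for y unfolding A_def by (rule finite_lists_sub[OF fin])
  define VR where "VR = {v\<in>V. dirof v = R}"
  define VL where "VL = {v\<in>V. dirof v = L}"
  have fR: "finite VR" "finite VL" using fin by (auto simp: VR_def VL_def)
  define I1 where "I1 = (\<lambda>(v, ws). v # ws) ` (VR \<times> A T (Suc x))"
  define I2 where "I2 = (if 0 < x then (\<lambda>(v, ws). v # ws) ` (VL \<times> A T (x - 1)) else {})"
  have sub: "A (Suc T) x \<subseteq> I1 \<union> I2"
  proof
    fix ws assume "ws \<in> A (Suc T) x"
    then obtain v ws' where ws: "ws = v # ws'" and v: "v \<in> V" "set ws' \<subseteq> V" "length ws' = T"
      and okv: "ok x (dirof v # map dirof ws')"
      unfolding A_def by (cases ws) auto
    show "ws \<in> I1 \<union> I2"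
    proof (cases "dirof v")
      case L
      then have "0 < x" "ok (x - 1) (map dirof ws')" using okv by auto
      then have "(v, ws') \<in> VL \<times> A T (x - 1)" using v L by (auto simp: A_def VL_def)
      then have "v # ws' \<in> (\<lambda>(v, ws). v # ws) ` (VL \<times> A T (x - 1))"
        by (rule rev_image_eqI) simp
      then show ?thesis unfolding I2_def ws using \<open>0 < x\<close> by simp
    next
      case R
      then have "ok (Suc x) (map dirof ws')" using okv by auto
      then have "(v, ws') \<in> VR \<times> A T (Suc x)" using v R by (auto simp: A_def VR_def)
      then have "v # ws' \<in> (\<lambda>(v, ws). v # ws) ` (VR \<times> A T (Suc x))"
        by (rule rev_image_eqI) simp
      then show ?thesis unfolding I1_def ws by simp
    qed
  qed
  have finI: "finite I1" "finite I2" unfolding I1_def I2_def using finA fR by auto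
  have c1: "card I1 \<le> c * card (A T (Suc x))"
    unfolding I1_def using card_image_le[of "VR \<times> A T (Suc x)" "\<lambda>(v, ws). v # ws"] finA fR
    by (simp add: card_cartesian_product VR_def cR)
  have c2: "card I2 \<le> (if 0 < x then c * card (A T (x - 1)) else 0)"
    unfolding I2_def using card_image_le[of "VL \<times> A T (x - 1)" "\<lambda>(v, ws). v # ws"] finA fR
    by (simp add: card_cartesian_product VL_def cL)
  have "card (A (Suc T) x) \<le> card I1 + card I2"
    using card_mono[OF _ sub] card_Un_le[of I1 I2] finI by auto
  then have "real (card (A (Suc T) x)) \<le> real c * real (card (A T (Suc x))) + (if 0 < x then real c * real (card (A T (x - 1))) else 0)"
    using c1 c2 by (auto simp del: of_nat_mult simp: of_nat_mult[symmetric] split: if_splits)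
  also have "\<dots> \<le> real c * ((2 * real c) ^ T * pw T (Suc x)) + (if 0 < x then real c * ((2 * real c) ^ T * pw T (x - 1)) else 0)"
    using Suc.IH[of "Suc x"] Suc.IH[of "x - 1"] unfolding A_def
    by (intro add_mono) (auto intro: mult_left_mono)
  also have "\<dots> = (2 * real c) ^ Suc T * pw (Suc T) x"
    by (simp add: field_simps)
  finally show ?case unfolding A_def .
qed

lemma cyl_card:
  assumes finD: "finite D" and finV: "finite V" and inj: "inj_on \<kappa> {..<m}" and sub: "\<kappa> ` {..<m} \<subseteq> D"
    and finU: "\<And>i. i < m \<Longrightarrow> finite (U i)"
  shows "card {p \<in> PiE D (\<lambda>_. V). \<forall>i<m. p (\<kappa> i) \<in> U i} \<le> (\<Prod>i<m. card (U i)) * card V ^ (card D - m)"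
proof -
  let ?K = "\<kappa> ` {..<m}"
  define B where "B k = (if k \<in> ?K then U (the_inv_into {..<m} \<kappa> k) else V)" for k
  have Bk: "B (\<kappa> i) = U i" if "i < m" for i
    using that inj by (simp add: B_def the_inv_into_f_f)
  have finB: "finite (B k)" for k
    using finV finU the_inv_into_into[OF inj, of k "{..<m}"] unfolding B_def by auto
  have s: "{p \<in> PiE D (\<lambda>_. V). \<forall>i<m. p (\<kappa> i) \<in> U i} \<subseteq> PiE D B"
  proof
    fix p assume p: "p \<in> {p \<in> PiE D (\<lambda>_. V). \<forall>i<m. p (\<kappa> i) \<in> U i}"
    show "p \<in> PiE D B" unfolding PiE_iff
    proof (intro conjI ballI)
      fix k assume k: "k \<in> D"
      show "p k \<in> B k"
      proof (cases "k \<in> ?K")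
        case True
        then obtain i where i: "i < m" "k = \<kappa> i" by auto
        then show ?thesis using p Bk by auto
      next
        case False then show ?thesis using p k by (auto simp: B_def PiE_iff)
      qed
    next
      show "p \<in> extensional D" using p by (auto simp: PiE_iff)
    qed
  qed
  have "card {p \<in> PiE D (\<lambda>_. V). \<forall>i<m. p (\<kappa> i) \<in> U i} \<le> card (PiE D B)"
    by (rule card_mono[OF _ s]) (use finD finB in \<open>auto intro: finite_PiE\<close>)
  also have "\<dots> = (\<Prod>k\<in>D. card (B k))" using finD by (rule card_PiE)
  also have "\<dots> = (\<Prod>k\<in>D - ?K. card (B k)) * (\<Prod>k\<in>?K. card (B k))"
    by (rule prod.subset_diff[OF sub finD])
  also have "(\<Prod>k\<in>?K. card (B k)) = (\<Prod>i<m. card (U i))"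
    using inj by (simp add: prod.reindex Bk)
  also have "(\<Prod>k\<in>D - ?K. card (B k)) = card V ^ card (D - ?K)"
    by (simp add: B_def)
  also have "card (D - ?K) = card D - m"
    using card_Diff_subset[OF _ sub] inj by (simp add: card_image)
  finally show ?thesis by (simp add: mult.commute)
qed



lemma exists_first: "P 0 \<Longrightarrow> \<not> P T \<Longrightarrow> \<exists>s<T. P s \<and> \<not> P (Suc s)"
proof (induction T)
  case 0 then show ?case by simp
next
  case (Suc T) then show ?case by (cases "P T") (auto intro: less_SucI)
qed

lemma run_Fell: "fst (run p i) = Fell \<Longrightarrow> i \<le> j \<Longrightarrow> fst (run p j) = Fell"
proof -
  assume a: "fst (run p i) = Fell" "i \<le> j"
  have "run p j = (step p ^^ (j - i)) (run p i)"
    unfolding run_def using a(2) by (metis funpow_add le_add_diff_inverse2 o_apply)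
  also have "\<dots> = run p i" by (rule funpow_fix, rule step_fix) (use a in simp)
  finally show ?thesis using a by simp
qed

lemma SB_mem:
  assumes p: "p \<in> programs n" and n: "0 < n" and cf: "CF n (trace p s)"
    and ncf: "\<not> CF n (trace p (Suc s))" and nf: "fst (run p (Suc s)) \<noteq> Fell"
  shows "p (keyc (run p s)) \<in> {v \<in> instrs n. fst v \<in> insert None (Some ` ((\<lambda>i. stq (sim (take i (trace p s)))) ` {..length (trace p s)}))}"
proof -
  define ws where "ws = trace p s"
  define v where "v = p (keyc (run p s))"
  have vin: "v \<in> instrs n" unfolding v_def using prog_val[OF p stq_run[OF p n]] .
  have "fst v \<in> insert None (Some ` ((\<lambda>i. stq (sim (take i ws))) ` {..length ws}))"
  proof (cases "fst v")
    case None then show ?thesis by simp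
  next
    case (Some r)
    obtain j d where v: "v = (Some r, j, d)" using Some by (cases v) auto
    have rn: "r < n" using vin unfolding v instrs_eq by auto
    from cf have "\<forall>i \<le> s. \<exists>q<n. fst (sim (take i (trace p s))) = Running q" unfolding CF_def by simp
    then have "\<exists>q<n. fst (sim (take s (trace p s))) = Running q" by blast
    then obtain q where "fst (run p s) = Running q" by (auto simp: take_trace sim_trace)
    then obtain t h where rs: "run p s = (Running q, t, h)" by (cases "run p s") auto
    have rS: "run p (Suc s) = stepv v (run p s)" by (simp add: run_Suc v_def)
    have "fst (run p (Suc s)) = Running r"
      using nf unfolding rS rs v by (auto simp: stepv_def split: if_splits)
    moreover have "sim (ws @ [v]) = run p (Suc s)"
      unfolding ws_def v_def by (simp flip: trace_Suc add: sim_trace)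
    moreover have "ws @ [v] = trace p (Suc s)" unfolding ws_def v_def by (simp add: trace_Suc)
    ultimately have "r \<in> (\<lambda>i. stq (sim (take i ws))) ` {..length ws}"
      using CF_snoc[of n ws v r] cf ncf rn unfolding ws_def by auto
    then show ?thesis using Some by simp
  qed
  then show ?thesis using vin unfolding ws_def v_def by simp
qed

lemma card_X: "card {v \<in> instrs n. fst v \<in> insert None (Some ` ((\<lambda>i. f i) ` {..l}))} \<le> 4 * (l + 2)"
proof -
  let ?S = "(\<lambda>i. f i) ` {..l}"
  have sub: "{v \<in> instrs n. fst v \<in> insert None (Some ` ?S)} \<subseteq> insert None (Some ` ?S) \<times> (UNIV :: (bool \<times> dir) set)"
    by auto
  have "card {v \<in> instrs n. fst v \<in> insert None (Some ` ?S)} \<le> card (insert None (Some ` ?S) \<times> (UNIV :: (bool \<times> dir) set))"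
    by (rule card_mono[OF _ sub]) simp
  also have "\<dots> = card (insert None (Some ` ?S)) * 4" by (simp add: card_cartesian_product card_bd)
  also have "card (insert None (Some ` ?S)) \<le> Suc (card (Some ` ?S))" by (simp add: card_insert_le_m1 card_insert_if)
  also have "card (Some ` ?S) \<le> card ?S" by (rule card_image_le) simp
  also have "card ?S \<le> card {..l}" by (rule card_image_le) simp
  finally show ?thesis by simp
qed

lemma bad_bound:
  assumes n: "0 < n" and T: "T \<le> n"
  shows "real (card {p \<in> programs n. fst (run p T) \<noteq> Fell})
     \<le> real (card (programs n)) * (pw T 0 + real (T * (T + 1)) / real (n + 1))"
proof -
  define D where "D = {0..<n} \<times> (UNIV :: bool set)"
  define Vn where "Vn = instrs n"
  define vv where "vv = card Vn"
  have vv: "vv = 4 * (n + 1)" unfolding vv_def Vn_def by (rule card_instrs)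
  have cD: "card D = 2 * n" unfolding D_def by (simp add: card_cartesian_product)
  have finD: "finite D" unfolding D_def by simp
  have finV: "finite Vn" unfolding Vn_def by simp
  have P: "programs n = PiE D (\<lambda>_. Vn)" unfolding programs_def D_def Vn_def ..
  have finPi: "finite (PiE D (\<lambda>_. Vn))" by (intro finite_PiE finD) (simp add: finV)
  have cP: "card (programs n) = vv ^ (2 * n)" unfolding vv card_programs ..
  define SA where "SA = {p \<in> programs n. CF n (trace p T)}"
  define SB where "SB s = {p \<in> programs n. CF n (trace p s) \<and> \<not> CF n (trace p (Suc s)) \<and> fst (run p (Suc s)) \<noteq> Fell}" for s
  have cover: "{p \<in> programs n. fst (run p T) \<noteq> Fell} \<subseteq> SA \<union> (\<Union>s<T. SB s)"
  proof
    fix p assume p: "p \<in> {p \<in> programs n. fst (run p T) \<noteq> Fell}"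
    show "p \<in> SA \<union> (\<Union>s<T. SB s)"
    proof (cases "CF n (trace p T)")
      case True then show ?thesis using p unfolding SA_def by auto
    next
      case False
      have "CF n (trace p 0)" using CF_Nil[OF n] by (simp add: trace_def)
      from exists_first[of "\<lambda>s. CF n (trace p s)", OF this False]
      obtain s where s: "s < T" "CF n (trace p s)" "\<not> CF n (trace p (Suc s))" by blast
      have "fst (run p (Suc s)) \<noteq> Fell" using run_Fell[of p "Suc s" T] p s(1) by auto
      then have "p \<in> SB s" using s p unfolding SB_def by auto
      then show ?thesis using s(1) by blast
    qed
  qed
  define WA where "WA = {ws. set ws \<subseteq> Vn \<and> length ws = T \<and> CF n ws}"
  define Cyl where "Cyl ws = {p \<in> PiE D (\<lambda>_. Vn). \<forall>i<T. p (kap ws i) \<in> {ws ! i}}" for ws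
  have SAsub: "SA \<subseteq> (\<Union>ws\<in>WA. Cyl ws)"
  proof
    fix p assume p: "p \<in> SA"
    have "trace p T \<in> WA" using p trace_in[of p n T] n unfolding SA_def WA_def Vn_def by auto
    moreover have "p \<in> Cyl (trace p T)"
      using p unfolding Cyl_def SA_def P by (auto simp: kap_trace nth_trace)
    ultimately show "p \<in> (\<Union>ws\<in>WA. Cyl ws)" by blast
  qed
  have finWA: "finite WA" unfolding WA_def by (rule finite_lists_sub[OF finV])
  have cCyl: "card (Cyl ws) \<le> vv ^ (2 * n - T)" if ws: "ws \<in> WA" for ws
  proof -
    have "card (Cyl ws) \<le> (\<Prod>i<T. card {ws ! i}) * card Vn ^ (card D - T)"
      unfolding Cyl_def
    proof (rule cyl_card[OF finD finV])
      show "inj_on (kap ws) {..<T}" using ws unfolding WA_def by (auto intro: kap_inj)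
      show "kap ws ` {..<T} \<subseteq> D" using ws n unfolding WA_def D_def Vn_def by (intro image_subsetI kap_in) auto
    qed simp
    then show ?thesis by (simp add: cD vv_def)
  qed
  have "card SA \<le> card (\<Union>ws\<in>WA. Cyl ws)"
    by (rule card_mono[OF _ SAsub]) (auto simp: Cyl_def finWA intro: rev_finite_subset[OF finPi])
  also have "\<dots> \<le> (\<Sum>ws\<in>WA. card (Cyl ws))" by (rule card_UN_le[OF finWA])
  also have "\<dots> \<le> card WA * vv ^ (2 * n - T)"
    using sum_bounded_above[of WA "\<lambda>ws. card (Cyl ws)" "vv ^ (2 * n - T)"] cCyl by simp
  finally have cSA: "card SA \<le> card WA * vv ^ (2 * n - T)" .
  have "card WA \<le> card {ws. set ws \<subseteq> Vn \<and> length ws = T \<and> ok 0 (map dirof ws)}"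
    by (rule card_mono) (auto simp: WA_def intro: finite_lists_sub[OF finV] CF_ok)
  moreover have "real (card {ws. set ws \<subseteq> Vn \<and> length ws = T \<and> ok 0 (map dirof ws)})
      \<le> (2 * real (2 * (n + 1))) ^ T * pw T 0"
    by (rule count_ok[OF finV]) (simp_all add: Vn_def dirof_def card_instrs_dir)
  ultimately have "real (card WA) \<le> real vv ^ T * pw T 0" unfolding vv by simp
  then have "real (card SA) \<le> real vv ^ T * pw T 0 * real vv ^ (2 * n - T)"
    using cSA by (smt (verit) mult_right_mono of_nat_0_le_iff of_nat_le_iff of_nat_mult of_nat_power zero_le_power)
  also have "\<dots> = real vv ^ (2 * n) * pw T 0"
    using T by (simp add: power_add[symmetric] mult.commute mult.left_commute)
  finally have RA: "real (card SA) \<le> real vv ^ (2 * n) * pw T 0" .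
  define WB where "WB s = {ws. set ws \<subseteq> Vn \<and> length ws = s \<and> CF n ws}" for s
  define X where "X ws = {v \<in> Vn. fst v \<in> insert None (Some ` ((\<lambda>i. stq (sim (take i ws))) ` {..length ws}))}" for ws
  define U where "U ws i = (if i < length ws then {ws ! i} else X ws)" for ws i
  define CylB where "CylB ws = {p \<in> PiE D (\<lambda>_. Vn). \<forall>i<Suc (length ws). p (kap ws i) \<in> U ws i}" for ws
  have cSB: "card (SB s) \<le> 4 * (T + 1) * vv ^ (2 * n - 1)" if sT: "s < T" for s
  proof -
    have SBsub: "SB s \<subseteq> (\<Union>ws\<in>WB s. CylB ws)"
    proof
      fix p assume p: "p \<in> SB s"
      have pp: "p \<in> programs n" using p unfolding SB_def by simp
      have "trace p s \<in> WB s" using p trace_in[of p n s] n unfolding SB_def WB_def Vn_def by auto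
      moreover have "p \<in> CylB (trace p s)"
        unfolding CylB_def
      proof (intro CollectI conjI allI impI)
        show "p \<in> PiE D (\<lambda>_. Vn)" using pp P by simp
        fix i assume i: "i < Suc (length (trace p s))"
        show "p (kap (trace p s) i) \<in> U (trace p s) i"
        proof (cases "i < s")
          case True then show ?thesis by (simp add: U_def kap_trace nth_trace)
        next
          case False
          then have iss: "i = s" using i by simp
          show ?thesis using SB_mem[OF pp n] p unfolding iss U_def X_def SB_def Vn_def
            by (simp add: kap_trace)
        qed
      qed
      ultimately show "p \<in> (\<Union>ws\<in>WB s. CylB ws)" by blast
    qed
    have finWB: "finite (WB s)" unfolding WB_def by (rule finite_lists_sub[OF finV])
    have cCylB: "card (CylB ws) \<le> 4 * (s + 2) * vv ^ (2 * n - Suc s)" if ws: "ws \<in> WB s" for ws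
    proof -
      have lw: "length ws = s" using ws unfolding WB_def by simp
      have "card (CylB ws) \<le> (\<Prod>i<Suc s. card (U ws i)) * card Vn ^ (card D - Suc s)"
        unfolding CylB_def lw
      proof (rule cyl_card[OF finD finV])
        show "inj_on (kap ws) {..<Suc s}" using ws lw unfolding WB_def by (auto intro: kap_inj)
        show "kap ws ` {..<Suc s} \<subseteq> D" using ws n unfolding WB_def D_def Vn_def by (intro image_subsetI kap_in) auto
        show "finite (U ws i)" for i using finV by (simp add: U_def X_def)
      qed
      also have "(\<Prod>i<Suc s. card (U ws i)) = card (X ws)"
        by (simp add: U_def lw)
      also have "card (X ws) \<le> 4 * (s + 2)"
        unfolding X_def Vn_def lw[symmetric] by (rule card_X)
      finally show ?thesis by (simp add: cD vv_def)
    qed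
    have "card (SB s) \<le> card (\<Union>ws\<in>WB s. CylB ws)"
      by (rule card_mono[OF _ SBsub]) (auto simp: CylB_def finWB intro: rev_finite_subset[OF finPi])
    also have "\<dots> \<le> (\<Sum>ws\<in>WB s. card (CylB ws))" by (rule card_UN_le[OF finWB])
    also have "\<dots> \<le> card (WB s) * (4 * (s + 2) * vv ^ (2 * n - Suc s))"
      using sum_bounded_above[of "WB s" "\<lambda>ws. card (CylB ws)" "4 * (s + 2) * vv ^ (2 * n - Suc s)"] cCylB by simp
    also have "card (WB s) \<le> vv ^ s"
    proof -
      have "card (WB s) \<le> card {ws. set ws \<subseteq> Vn \<and> length ws = s}"
        by (rule card_mono) (auto simp: WB_def intro: finite_lists_length_eq[OF finV])
      also have "\<dots> = vv ^ s" unfolding vv_def by (rule card_lists_length_eq[OF finV])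
      finally show ?thesis .
    qed
    also have "vv ^ s * (4 * (s + 2) * vv ^ (2 * n - Suc s)) = 4 * (s + 2) * vv ^ (2 * n - 1)"
    proof -
      have "s + (2 * n - Suc s) = 2 * n - 1" using sT T by simp
      then show ?thesis by (metis mult.commute mult.left_commute power_add)
    qed
    also have "\<dots> \<le> 4 * (T + 1) * vv ^ (2 * n - 1)" using sT by simp
    finally show ?thesis by simp
  qed
  have "card {p \<in> programs n. fst (run p T) \<noteq> Fell} \<le> card (SA \<union> (\<Union>s<T. SB s))"
    by (rule card_mono[OF _ cover]) (auto simp: SA_def SB_def P intro: rev_finite_subset[OF finPi])
  also have "\<dots> \<le> card SA + card (\<Union>s<T. SB s)" by (rule card_Un_le)
  also have "card (\<Union>s<T. SB s) \<le> (\<Sum>s<T. card (SB s))" by (rule card_UN_le) simp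
  also have "\<dots> \<le> T * (4 * (T + 1) * vv ^ (2 * n - 1))"
    using sum_bounded_above[of "{..<T}" "\<lambda>s. card (SB s)" "4 * (T + 1) * vv ^ (2 * n - 1)"] cSB by simp
  finally have tot: "real (card {p \<in> programs n. fst (run p T) \<noteq> Fell}) \<le> real (card SA) + real (T * (4 * (T + 1) * vv ^ (2 * n - 1)))"
    by linarith
  have vvN: "real vv ^ (2 * n) = real (4 * (n + 1)) * real vv ^ (2 * n - 1)"
  proof -
    have "2 * n = Suc (2 * n - 1)" using n by simp
    then have "real vv ^ (2 * n) = real vv * real vv ^ (2 * n - 1)" by (metis power_Suc)
    then show ?thesis by (simp add: vv)
  qed
  have "real (T * (4 * (T + 1) * vv ^ (2 * n - 1))) = real vv ^ (2 * n) * (real (T * (T + 1)) / real (n + 1))"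
    unfolding vvN by (simp add: field_simps)
  then show ?thesis using tot RA unfolding cP by (simp add: algebra_simps)
qed



lemma card_prog_pos: "0 < card (programs n)"
  by (simp add: card_programs)

lemma fin_lower:
  assumes n: "0 < n" and T: "T \<le> n"
  shows "1 - pw T 0 - real (T * (T + 1)) / real (n + 1) \<le> real (card (FIN \<inter> programs n)) / real (card (programs n))"
proof -
  let ?B = "{p \<in> programs n. fst (run p T) \<noteq> Fell}"
  have finP: "finite (programs n)" unfolding programs_def by (intro finite_PiE) auto
  have "programs n - ?B \<subseteq> FIN \<inter> programs n" using fell_FIN by auto
  then have "card (programs n - ?B) \<le> card (FIN \<inter> programs n)"
    by (rule card_mono[rotated]) (use finP in auto)
  moreover have "card (programs n - ?B) = card (programs n) - card ?B"
    by (rule card_Diff_subset) (use finP in auto)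
  moreover have "card ?B \<le> card (programs n)" by (rule card_mono) (use finP in auto)
  ultimately have "real (card (programs n)) - real (card ?B) \<le> real (card (FIN \<inter> programs n))"
    by linarith
  then have "real (card (programs n)) * (1 - pw T 0 - real (T * (T + 1)) / real (n + 1)) \<le> real (card (FIN \<inter> programs n))"
    using bad_bound[OF n T] by (simp add: algebra_simps)
  then show ?thesis using card_prog_pos[of n] by (simp add: field_simps)
qed

lemma fin_upper: "real (card (FIN \<inter> programs n)) / real (card (programs n)) \<le> 1"
proof -
  have finP: "finite (programs n)" unfolding programs_def by (intro finite_PiE) auto
  have "card (FIN \<inter> programs n) \<le> card (programs n)" by (rule card_mono) (use finP in auto)
  then show ?thesis using card_prog_pos[of n] by simp
qed

lemma cof_upper: "real (card (COF \<inter> programs n)) / real (card (programs n))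
    \<le> 1 - real (card (FIN \<inter> programs n)) / real (card (programs n))"
proof -
  have finP: "finite (programs n)" unfolding programs_def by (intro finite_PiE) auto
  have disj: "COF \<inter> FIN = {}"
  proof (rule ccontr)
    assume "COF \<inter> FIN \<noteq> {}"
    then obtain p where "finite (dom_prog p)" "finite (UNIV - dom_prog p)" unfolding COF_def FIN_def by auto
    then have "finite (dom_prog p \<union> (UNIV - dom_prog p))" by simp
    then show False by simp
  qed
  have "card (COF \<inter> programs n) + card (FIN \<inter> programs n) = card ((COF \<inter> programs n) \<union> (FIN \<inter> programs n))"
    by (rule card_Un_disjoint[symmetric]) (use finP disj in auto)
  also have "\<dots> \<le> card (programs n)" by (rule card_mono) (use finP in auto)
  finally have "real (card (COF \<inter> programs n)) + real (card (FIN \<inter> programs n)) \<le> real (card (programs n))"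
    by linarith
  then show ?thesis using card_prog_pos[of n] by (simp add: field_simps)
qed

lemma fin_eventually:
  assumes e: "0 < (e::real)"
  shows "\<exists>N. \<forall>n\<ge>N. 1 - e < real (card (FIN \<inter> programs n)) / real (card (programs n))"
proof -
  obtain T where T: "pw T 0 < e / 2" using pw_tends0[of "e / 2"] e by auto
  obtain M :: nat where M: "2 * real (T * (T + 1)) / e < real M" using reals_Archimedean2 by blast
  show ?thesis
  proof (intro exI allI impI)
    fix n assume nN: "max M (max T 1) \<le> n"
    then have n: "0 < n" "T \<le> n" "M \<le> n" by auto
    have "2 * real (T * (T + 1)) < e * real M" using M e by (simp add: field_simps)
    also have "\<dots> \<le> e * real (n + 1)" using n(3) e by simp
    finally have "real (T * (T + 1)) / real (n + 1) < e / 2" by (simp add: field_simps)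
    then show "1 - e < real (card (FIN \<inter> programs n)) / real (card (programs n))"
      using fin_lower[OF n(1,2)] T by linarith
  qed
qed

theorem mainTheorem9:
  shows "has_asym_prob FIN 1 \<and> has_asym_prob COF 0"
proof
  show "has_asym_prob FIN 1" unfolding has_asym_prob_def
  proof (rule LIMSEQ_I)
    fix r :: real assume r: "0 < r"
    obtain N where N: "\<forall>n\<ge>N. 1 - r < real (card (FIN \<inter> programs n)) / real (card (programs n))"
      using fin_eventually[OF r] by blast
    have "norm (real (card (FIN \<inter> programs n)) / real (card (programs n)) - 1) < r" if "n \<ge> N" for n
    proof -
      have "1 - r < real (card (FIN \<inter> programs n)) / real (card (programs n))" using N that by blast
      moreover have "real (card (FIN \<inter> programs n)) / real (card (programs n)) \<le> 1" by (rule fin_upper)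
      ultimately show ?thesis by simp
    qed
    then show "\<exists>no. \<forall>n\<ge>no. norm (real (card (FIN \<inter> programs n)) / real (card (programs n)) - 1) < r"
      by blast
  qed
  show "has_asym_prob COF 0" unfolding has_asym_prob_def
  proof (rule LIMSEQ_I)
    fix r :: real assume r: "0 < r"
    obtain N where N: "\<forall>n\<ge>N. 1 - r < real (card (FIN \<inter> programs n)) / real (card (programs n))"
      using fin_eventually[OF r] by blast
    have "norm (real (card (COF \<inter> programs n)) / real (card (programs n)) - 0) < r" if "n \<ge> N" for n
    proof -
      have "1 - r < real (card (FIN \<inter> programs n)) / real (card (programs n))" using N that by blast
      moreover have "0 \<le> real (card (COF \<inter> programs n)) / real (card (programs n))" by simp
      ultimately show ?thesis using cof_upper[of n] by simp
    qed
    then show "\<exists>no. \<forall>n\<ge>no. norm (real (card (COF \<inter> programs n)) / real (card (programs n)) - 0) < r"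
      by blast
  qed
qed

end
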